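(* Let $\mathcal{K}$ be a class of groups closed under homomorphic images, subgroups, and direct products of finitely many factors. If a group $G$ is conjugacy $\mathcal{K}$-separable, then for every finite normal subgroup $N$ of $G$ the quotient group $G/N$ is conjugacy $\mathcal{K}$-separable.
   Context: A group $G$ is conjugacy $\mathcal{K}$-separable if whenever $a,b\in G$ are not conjugate in $G$, there is a homomorphism $\varphi$ of $G$ onto a group $X\in\mathcal{K}$ such that $a\varphi$ and $b\varphi$ are not conjugate in $X$. *)

theory Defs
  imports "HOL-Algebra.Algebra"
begin

definition conjugate_in :: "('a, 'b) monoid_scheme \<Rightarrow> 'a \<Rightarrow> 'a \<Rightarrow> bool" where
  "conjugate_in G a b \<longleftrightarrow> (\<exists>g\<in>carrier G. b = inv\<^bsub>G\<^esub> g \<otimes>\<^bsub>G\<^esub> a \<otimes>\<^bsub>G\<^esub> g)"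

definition fin_dir_prod :: "(nat \<Rightarrow> ('c, 'd) monoid_scheme) \<Rightarrow> nat \<Rightarrow> (nat \<Rightarrow> 'c) monoid" where
  "fin_dir_prod Xs n =
     \<lparr> carrier = (\<Pi>\<^sub>E i\<in>{..<n}. carrier (Xs i)),
       monoid.mult = (\<lambda>x y. \<lambda>i\<in>{..<n}. x i \<otimes>\<^bsub>Xs i\<^esub> y i),
       monoid.one = (\<lambda>i\<in>{..<n}. \<one>\<^bsub>Xs i\<^esub>) \<rparr>"

text \<open>A class of groups is modelled by a predicate K on groups whose
  elements live in a fixed universe type 'c.  Conjugacy K-separability:\<close>
definition conj_K_separable :: "('c monoid \<Rightarrow> bool) \<Rightarrow> ('a, 'b) monoid_scheme \<Rightarrow> bool" where
  "conj_K_separable K G \<longleftrightarrow>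
     (\<forall>a\<in>carrier G. \<forall>b\<in>carrier G. \<not> conjugate_in G a b \<longrightarrow>
        (\<exists>Q h. K (Q :: 'c monoid) \<and> h \<in> hom G Q \<and> h ` carrier G = carrier Q \<and>
             \<not> conjugate_in Q (h a) (h b)))"

end

theory Submission
  imports Defs
begin

definition transR :: "('a,'b) monoid_scheme \<Rightarrow> ('a \<Rightarrow> 'c) \<Rightarrow> 'c monoid" where
  "transR Q f = \<lparr>carrier = f ` carrier Q,
     monoid.mult = (\<lambda>x y. f (inv_into (carrier Q) f x \<otimes>\<^bsub>Q\<^esub> inv_into (carrier Q) f y)),
     one = f \<one>\<^bsub>Q\<^esub>\<rparr>"

lemma transport_group:
  fixes Q :: "('a,'b) monoid_scheme" and f :: "'a \<Rightarrow> 'c"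
  assumes "group Q" "inj_on f (carrier Q)"
  shows "group (transR Q f)" "f \<in> hom Q (transR Q f)" "carrier (transR Q f) = f ` carrier Q"
proof -
  interpret Q: group Q by fact
  have iv: "inv_into (carrier Q) f (f x) = x" if "x \<in> carrier Q" for x
    using assms(2) that by simp
  show "group (transR Q f)"
  proof (rule groupI)
    fix x assume "x \<in> carrier (transR Q f)"
    then obtain u where u: "u \<in> carrier Q" "x = f u" by (auto simp: transR_def)
    show "\<exists>y\<in>carrier (transR Q f). y \<otimes>\<^bsub>transR Q f\<^esub> x = \<one>\<^bsub>transR Q f\<^esub>"
      by (rule bexI[of _ "f (inv\<^bsub>Q\<^esub> u)"]) (use u iv in \<open>auto simp: transR_def\<close>)
  qed (auto simp: iv Q.m_assoc transR_def)
  show "f \<in> hom Q (transR Q f)"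
    by (auto simp: hom_def iv transR_def)
  show "carrier (transR Q f) = f ` carrier Q" by (simp add: transR_def)
qed
theorem proposition2:
  fixes K :: "'c monoid \<Rightarrow> bool" and G :: "('a, 'b) monoid_scheme" and N :: "'a set"
  assumes K_groups: "\<And>Q. K Q \<Longrightarrow> group Q"
    and K_hom_images: "\<And>Q R h. K Q \<Longrightarrow> group R \<Longrightarrow> h \<in> hom Q R \<Longrightarrow>
                         h ` carrier Q = carrier R \<Longrightarrow> K R"
    and K_subgroups: "\<And>Q H. K Q \<Longrightarrow> subgroup H Q \<Longrightarrow> K (Q\<lparr>carrier := H\<rparr>)"
    and K_fin_products: "\<And>(Xs :: nat \<Rightarrow> 'c monoid) n. (\<forall>i<n. K (Xs i)) \<Longrightarrow>
                           \<exists>Z. K Z \<and> fin_dir_prod Xs n \<cong> Z"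
    and "group G"
    and "conj_K_separable K G"
    and "N \<lhd> G"
    and "finite N"
  shows "conj_K_separable K (G Mod N)"
  unfolding conj_K_separable_def
proof (intro ballI impI)
  interpret G: group G by fact
  interpret N: normal N G by fact
  have NG: "subgroup N G" by (simp add: N.subgroup_axioms)
  have GN: "group (G Mod N)" by (simp add: N.factorgroup_is_group)
  have cosh: "group_hom G (G Mod N) (\<lambda>x. N #>\<^bsub>G\<^esub> x)"
    using N.r_coset_hom_Mod GN by (simp add: group_hom_def group_hom_axioms_def \<open>group G\<close>)
  fix A B assume A: "A \<in> carrier (G Mod N)" and B: "B \<in> carrier (G Mod N)"
    and nc: "\<not> conjugate_in (G Mod N) A B"
  obtain a b where ab: "a \<in> carrier G" "b \<in> carrier G" "A = N #>\<^bsub>G\<^esub> a" "B = N #>\<^bsub>G\<^esub> b"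
    using A B by (auto simp: carrier_FactGroup)
  have claim1: "\<not> conjugate_in G a (n \<otimes>\<^bsub>G\<^esub> b)" if n: "n \<in> N" for n
  proof
    assume "conjugate_in G a (n \<otimes>\<^bsub>G\<^esub> b)"
    then obtain g where g: "g \<in> carrier G" "n \<otimes>\<^bsub>G\<^esub> b = inv\<^bsub>G\<^esub> g \<otimes>\<^bsub>G\<^esub> a \<otimes>\<^bsub>G\<^esub> g"
      unfolding conjugate_in_def by blast
    have nb: "n \<in> carrier G" using n N.subset by blast
    have "N #>\<^bsub>G\<^esub> b = N #>\<^bsub>G\<^esub> (n \<otimes>\<^bsub>G\<^esub> b)"
      by (rule G.repr_independence[OF _ ab(2) NG]) (use n ab(2) in \<open>auto simp: r_coset_def\<close>)
    also have "\<dots> = inv\<^bsub>G Mod N\<^esub> (N #>\<^bsub>G\<^esub> g) \<otimes>\<^bsub>G Mod N\<^esub> (N #>\<^bsub>G\<^esub> a) \<otimes>\<^bsub>G Mod N\<^esub> (N #>\<^bsub>G\<^esub> g)"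
      using g ab by (simp add: group_hom.hom_inv[OF cosh] group_hom.hom_mult[OF cosh])
    finally have "conjugate_in (G Mod N) A B"
      unfolding conjugate_in_def using ab g by (auto simp: carrier_FactGroup)
    with nc show False by blast
  qed
  have "\<forall>n\<in>N. \<exists>p. K (fst p) \<and> snd p \<in> hom G (fst p) \<and> snd p ` carrier G = carrier (fst p) \<and>
             \<not> conjugate_in (fst p) (snd p a) (snd p (n \<otimes>\<^bsub>G\<^esub> b))"
  proof
    fix n assume n: "n \<in> N"
    have "n \<otimes>\<^bsub>G\<^esub> b \<in> carrier G" using n N.subset ab by blast
    then show "\<exists>p. K (fst p) \<and> snd p \<in> hom G (fst p) \<and> snd p ` carrier G = carrier (fst p) \<and>
             \<not> conjugate_in (fst p) (snd p a) (snd p (n \<otimes>\<^bsub>G\<^esub> b))"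
      using \<open>conj_K_separable K G\<close> claim1[OF n] ab unfolding conj_K_separable_def by fastforce
  qed
  then obtain pf where pf: "\<And>n. n \<in> N \<Longrightarrow> K (fst (pf n)) \<and> snd (pf n) \<in> hom G (fst (pf n)) \<and>
      snd (pf n) ` carrier G = carrier (fst (pf n)) \<and>
      \<not> conjugate_in (fst (pf n)) (snd (pf n) a) (snd (pf n) (n \<otimes>\<^bsub>G\<^esub> b))"
    by metis
  obtain k :: nat and e where e: "N = e ` {i. i < k}"
    using finite_imp_nat_seg_image_inj_on[OF \<open>finite N\<close>] by auto
  define Xs where "Xs i = fst (pf (e i))" for i
  define hs where "hs i = snd (pf (e i))" for i
  have eN: "e i \<in> N" if "i < k" for i using e that by blast
  have KX: "K (Xs i)" and hsh: "hs i \<in> hom G (Xs i)"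
    and gX: "group (Xs i)" if "i < k" for i
    using pf[OF eN[OF that]] K_groups unfolding Xs_def hs_def by auto
  obtain Z where KZ: "K Z" and iso: "fin_dir_prod Xs k \<cong> Z"
    using K_fin_products[of k Xs] KX by blast
  then obtain \<iota> where \<iota>: "\<iota> \<in> iso (fin_dir_prod Xs k) Z" unfolding is_iso_def by blast
  have gZ: "group Z" using KZ K_groups by blast
  define \<Phi> where "\<Phi> g = (\<lambda>i\<in>{..<k}. hs i g)" for g
  have \<Phi>c: "\<Phi> g \<in> carrier (fin_dir_prod Xs k)" if "g \<in> carrier G" for g
    using hsh that unfolding \<Phi>_def fin_dir_prod_def by (auto simp: hom_def)
  have \<Phi>h: "\<Phi> \<in> hom G (fin_dir_prod Xs k)"
    using hsh \<Phi>c unfolding hom_def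
    by (auto simp: \<Phi>_def fin_dir_prod_def)
  define \<psi> where "\<psi> g = \<iota> (\<Phi> g)" for g
  have \<iota>h: "\<iota> \<in> hom (fin_dir_prod Xs k) Z" using \<iota> by (simp add: iso_def)
  have \<iota>inj: "inj_on \<iota> (carrier (fin_dir_prod Xs k))" using \<iota> by (simp add: iso_def bij_betw_def)
  have \<psi>hZ: "\<psi> \<in> hom G Z"
    using \<Phi>h \<iota>h unfolding hom_def \<psi>_def by (auto simp: Pi_def)
  interpret Z: group Z by (rule gZ)
  have \<psi>gZ: "group_hom G Z \<psi>"
    by (simp add: group_hom_def group_hom_axioms_def gZ \<psi>hZ \<open>group G\<close>)
  define Y where "Y = Z\<lparr>carrier := \<psi> ` carrier G\<rparr>"
  have subY: "subgroup (\<psi> ` carrier G) Z" using group_hom.img_is_subgroup[OF \<psi>gZ] .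
  have KY: "K Y" unfolding Y_def using K_subgroups[OF KZ subY] .
  have gY: "group Y" using K_groups KY by blast
  have \<psi>hY: "\<psi> \<in> hom G Y" using \<psi>hZ by (auto simp: hom_def Y_def)
  have \<psi>gY: "group_hom G Y \<psi>"
    by (simp add: group_hom_def group_hom_axioms_def gY \<psi>hY \<open>group G\<close>)
  have \<psi>sY: "\<psi> ` carrier G = carrier Y" by (simp add: Y_def)
  define M where "M = \<psi> ` N"
  have MY: "M \<lhd> Y" unfolding M_def using N.surj_hom_normal_subgroup[OF \<psi>gY \<psi>sY] .
  interpret Y: group Y by (rule gY)
  interpret M: normal M Y by (rule MY)
  have MsY: "subgroup M Y" by (simp add: M.subgroup_axioms)
  define rep where "rep C = (SOME x. x \<in> C)" for C :: "'c set"
  have cYM: "carrier (Y Mod M) = rcosets\<^bsub>Y\<^esub> M" by (simp add: FactGroup_def)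
  have repin: "rep C \<in> C" if "C \<in> carrier (Y Mod M)" for C
  proof -
    have "C \<in> (\<lambda>x. M #>\<^bsub>Y\<^esub> x) ` carrier Y" using that by (simp only: carrier_FactGroup)
    then obtain y where y: "y \<in> carrier Y" "C = M #>\<^bsub>Y\<^esub> y" by (rule imageE)
    then have "y \<in> C" using Y.rcos_self[OF y(1) MsY] by simp
    then show ?thesis unfolding rep_def by (rule someI)
  qed
  have repinj: "inj_on rep (carrier (Y Mod M))"
  proof (rule inj_onI)
    fix C D assume C: "C \<in> carrier (Y Mod M)" and D: "D \<in> carrier (Y Mod M)" and eq: "rep C = rep D"
    show "C = D"
    proof (rule ccontr)
      assume "C \<noteq> D"
      then have "disjnt C D" using Y.rcos_disjoint[OF MsY] C D cYM by (auto simp: pairwise_def)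
      then show False using repin[OF C] repin[OF D] eq by (auto simp: disjnt_def)
    qed
  qed
  have gYM: "group (Y Mod M)" by (simp add: M.factorgroup_is_group)
  define R where "R = transR (Y Mod M) rep"
  have gR: "group R" and repH: "rep \<in> hom (Y Mod M) R" and cR: "carrier R = rep ` carrier (Y Mod M)"
    using transport_group[OF gYM repinj] unfolding R_def by auto
  define \<pi> where "\<pi> y = rep (M #>\<^bsub>Y\<^esub> y)" for y
  have \<pi>h: "\<pi> \<in> hom Y R"
    using M.r_coset_hom_Mod repH unfolding hom_def \<pi>_def by (auto simp: Pi_def)
  have \<pi>s: "\<pi> ` carrier Y = carrier R"
    unfolding cR carrier_FactGroup \<pi>_def by (simp add: image_image)
  have KR: "K R" using K_hom_images[OF KY gR \<pi>h \<pi>s] .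
  define \<theta> where "\<theta> g = \<pi> (\<psi> g)" for g
  have \<theta>h: "\<theta> \<in> hom G R"
    using \<psi>hY \<pi>h unfolding hom_def \<theta>_def by (auto simp: Pi_def)
  have \<theta>g: "group_hom G R \<theta>"
    by (simp add: group_hom_def group_hom_axioms_def gR \<theta>h \<open>group G\<close>)
  have \<theta>eq: "\<theta> x = \<theta> y" if xy: "x \<in> carrier G" "y \<in> carrier G" "N #>\<^bsub>G\<^esub> x = N #>\<^bsub>G\<^esub> y" for x y
  proof -
    have "y \<in> N #>\<^bsub>G\<^esub> x" using G.rcos_self[OF xy(2) NG] xy(3) by simp
    then obtain n where n: "n \<in> N" "y = n \<otimes>\<^bsub>G\<^esub> x" by (auto simp: r_coset_def)
    have nc: "n \<in> carrier G" using n N.subset by blast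
    have "\<psi> y = \<psi> n \<otimes>\<^bsub>Y\<^esub> \<psi> x" using n nc xy group_hom.hom_mult[OF \<psi>gY] by simp
    moreover have "\<psi> n \<in> M" using n M_def by blast
    moreover have "\<psi> n \<in> carrier Y" "\<psi> x \<in> carrier Y" using nc xy \<psi>sY by auto
    ultimately have "M #>\<^bsub>Y\<^esub> \<psi> y = (M #>\<^bsub>Y\<^esub> \<psi> n) #>\<^bsub>Y\<^esub> \<psi> x"
      using Y.coset_mult_assoc[OF M.subset] by simp
    also have "\<dots> = M #>\<^bsub>Y\<^esub> \<psi> x" using M.rcos_const[OF gY \<open>\<psi> n \<in> M\<close>] by simp
    finally have "M #>\<^bsub>Y\<^esub> \<psi> y = M #>\<^bsub>Y\<^esub> \<psi> x" .
    then show ?thesis unfolding \<theta>_def \<pi>_def by simp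
  qed
  obtain F where F: "F \<in> hom (G Mod N) R" "\<And>x. x \<in> carrier G \<Longrightarrow> F (N #>\<^bsub>G\<^esub> x) = \<theta> x"
    using FactGroup_universal[OF \<theta>h \<open>N \<lhd> G\<close> \<theta>eq] by blast
  have F\<theta>: "F ` carrier (G Mod N) = \<theta> ` carrier G"
    unfolding carrier_FactGroup image_image using F(2) by simp
  have \<theta>s: "\<theta> ` carrier G = carrier R"
  proof -
    have "\<theta> ` carrier G = \<pi> ` (\<psi> ` carrier G)" unfolding \<theta>_def by (simp add: image_image)
    then show ?thesis using \<psi>sY \<pi>s by simp
  qed
  have Fs: "F ` carrier (G Mod N) = carrier R" using F\<theta> \<theta>s by simp
  have "\<not> conjugate_in R (F A) (F B)"
  proof
    assume "conjugate_in R (F A) (F B)"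
    then obtain r where r: "r \<in> carrier R" "F B = inv\<^bsub>R\<^esub> r \<otimes>\<^bsub>R\<^esub> F A \<otimes>\<^bsub>R\<^esub> r"
      unfolding conjugate_in_def by blast
    then obtain g where g: "g \<in> carrier G" "r = \<theta> g"
      using \<theta>s by (metis imageE)
    define c where "c = inv\<^bsub>G\<^esub> g \<otimes>\<^bsub>G\<^esub> a \<otimes>\<^bsub>G\<^esub> g"
    have cc: "c \<in> carrier G" using g ab c_def by simp
    have "\<theta> b = \<theta> c"
      using r g ab F(2) group_hom.hom_mult[OF \<theta>g] group_hom.hom_inv[OF \<theta>g] unfolding c_def by simp
    then have "rep (M #>\<^bsub>Y\<^esub> \<psi> b) = rep (M #>\<^bsub>Y\<^esub> \<psi> c)" unfolding \<theta>_def \<pi>_def by simp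
    moreover have "\<psi> b \<in> carrier Y" "\<psi> c \<in> carrier Y" using ab cc \<psi>sY by auto
    ultimately have "M #>\<^bsub>Y\<^esub> \<psi> b = M #>\<^bsub>Y\<^esub> \<psi> c"
      using repinj by (auto simp: carrier_FactGroup inj_on_def)
    then have "\<psi> b \<in> M #>\<^bsub>Y\<^esub> \<psi> c" using Y.rcos_self[OF \<open>\<psi> b \<in> carrier Y\<close> MsY] by simp
    then obtain n where n: "n \<in> N" "\<psi> b = \<psi> n \<otimes>\<^bsub>Y\<^esub> \<psi> c" by (auto simp: r_coset_def M_def)
    have nc: "n \<in> carrier G" using n N.subset by blast
    have "\<psi> (inv\<^bsub>G\<^esub> n \<otimes>\<^bsub>G\<^esub> b) = inv\<^bsub>Y\<^esub> (\<psi> n) \<otimes>\<^bsub>Y\<^esub> (\<psi> n \<otimes>\<^bsub>Y\<^esub> \<psi> c)"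
      using nc ab n group_hom.hom_mult[OF \<psi>gY] group_hom.hom_inv[OF \<psi>gY] by simp
    also have "\<dots> = \<psi> c"
    proof -
      have "\<psi> n \<in> carrier Y" "\<psi> c \<in> carrier Y" using nc cc \<psi>sY by auto
      then show ?thesis by (simp add: Y.m_assoc[symmetric])
    qed
    finally have eq\<psi>: "\<psi> (inv\<^bsub>G\<^esub> n \<otimes>\<^bsub>G\<^esub> b) = \<psi> c" .
    have "inv\<^bsub>G\<^esub> n \<in> N" using n by (simp add: N.m_inv_closed)
    then obtain i where i: "i < k" "e i = inv\<^bsub>G\<^esub> n" using e by auto
    have nb: "inv\<^bsub>G\<^esub> n \<otimes>\<^bsub>G\<^esub> b \<in> carrier G" using nc ab by simp
    have "\<Phi> (inv\<^bsub>G\<^esub> n \<otimes>\<^bsub>G\<^esub> b) = \<Phi> c"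
      using eq\<psi> \<iota>inj \<Phi>c[OF nb] \<Phi>c[OF cc] unfolding \<psi>_def inj_on_def by blast
    then have "hs i (inv\<^bsub>G\<^esub> n \<otimes>\<^bsub>G\<^esub> b) = hs i c" using i unfolding \<Phi>_def by (metis lessThan_iff restrict_apply')
    also have "\<dots> = inv\<^bsub>Xs i\<^esub> (hs i g) \<otimes>\<^bsub>Xs i\<^esub> hs i a \<otimes>\<^bsub>Xs i\<^esub> hs i g"
    proof -
      have hg: "group_hom G (Xs i) (hs i)"
        by (simp add: group_hom_def group_hom_axioms_def gX[OF i(1)] hsh[OF i(1)] \<open>group G\<close>)
      show ?thesis using g ab group_hom.hom_mult[OF hg] group_hom.hom_inv[OF hg] unfolding c_def by simp
    qed
    finally have "conjugate_in (Xs i) (hs i a) (hs i (e i \<otimes>\<^bsub>G\<^esub> b))"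
      unfolding conjugate_in_def using i g hsh[OF i(1)] by (auto simp: hom_def)
    then show False using pf[OF eN[OF i(1)]] unfolding Xs_def hs_def by blast
  qed
  then show "\<exists>Q h. K Q \<and> h \<in> hom (G Mod N) Q \<and> h ` carrier (G Mod N) = carrier Q \<and> \<not> conjugate_in Q (h A) (h B)"
    using KR F(1) Fs by blast
qed

end
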